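(* Let $k\in\mathbb N$ with $k\geq 3$. The family of sets $R_{i,j}$ with $i\in\{k-3,k-2\}$ and $j\in\mathbb Z$ satisfying $-F(i+1)\geq j\geq 1-F(k)$ (the $k$-th standard Fibonacci-like partition of the second kind) consists of $F(k)$ sets which are pairwise disjoint and whose union is $\{n\in\mathbb N\mid n\geq F(k)\}$.
   Context: $\mathbb N=\{1,2,\dots\}$, $\varphi=\frac{1+\sqrt5}{2}$, $a(n)=\lfloor n\varphi\rfloor$. $F$ is the Fibonacci sequence with $F(0)=0$, $F(1)=F(2)=1$, $F(n)=F(n-1)+F(n-2)$. For $i\in\mathbb Z^{\geq 0}$, $j\in\mathbb Z$: $f_{i,j}(n)=F(i+1)a(n)+F(i)n-j$ ($n\in\mathbb N$) and $R_{i,j}=\{f_{i,j}(n)\mid n\in\mathbb N\}$. *)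

theory Defs
  imports Complex_Main "HOL-Number_Theory.Fib"
begin

definition phi :: real where
  "phi = (1 + sqrt 5) / 2"

definition a :: "nat \<Rightarrow> int" where
  "a n = \<lfloor>real n * phi\<rfloor>"

(* f_{i,j}(n) = F(i+1) a(n) + F(i) n - j, with F = fib (fib 0 = 0, fib 1 = fib 2 = 1) *)
definition f :: "nat \<Rightarrow> int \<Rightarrow> nat \<Rightarrow> int" where
  "f i j n = int (fib (i + 1)) * a n + int (fib i) * int n - j"

definition R :: "nat \<Rightarrow> int \<Rightarrow> int set" where
  "R i j = {f i j n | n. n \<ge> 1}"

end

theory Submission
  imports Defs "HOL-Computational_Algebra.Primes"
begin
lemma p5: "prime (5::nat)" proof - have "{2..<5::nat} = {2,3,4}" by auto then show ?thesis by (simp add: prime_nat_iff') qed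
lemma no5: "(m::nat)^2 = 5 * n^2 \<Longrightarrow> n = 0"
proof (induction n arbitrary: m rule: less_induct)
  case (less n)
  have "5 dvd m^2" using less.prems by simp
  then have "5 dvd m" using p5 prime_dvd_power by blast
  then obtain q where q: "m = 5*q" by blast
  have "n^2 = 5*q^2" using less.prems q by (simp add: power_mult_distrib)
  then have "5 dvd n^2" by simp
  then have "5 dvd n" using p5 prime_dvd_power by blast
  then obtain r where r: "n = 5*r" by blast
  have "q^2 = 5*r^2" using \<open>n^2 = 5*q^2\<close> r by (simp add: power_mult_distrib)
  show ?case
  proof (rule ccontr)
    assume "n \<noteq> 0"
    then have "r < n" using r by simp
    then have "r = 0" using less.IH \<open>q^2 = 5*r^2\<close> by blast
    then show False using r \<open>n \<noteq> 0\<close> by simp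
  qed
qed

lemma sqrt5: "sqrt 5 * sqrt 5 = (5::real)" by simp
lemma sqrt5_bounds: "2 < sqrt (5::real)" "sqrt (5::real) < 3"
proof -
  show "2 < sqrt (5::real)" by (rule real_less_rsqrt) simp
  show "sqrt (5::real) < 3" by (rule real_less_lsqrt) simp_all
qed
lemma phi_gt1: "phi > 1" using sqrt5_bounds by (simp add: phi_def)
lemma phi_lt2: "phi < 2" using sqrt5_bounds by (simp add: phi_def)
lemma phi_sq: "phi * phi = phi + 1"
  unfolding phi_def by (simp add: field_simps sqrt5 algebra_simps)

lemma irr: assumes "n \<ge> 1" shows "real n * phi \<noteq> of_int c"
proof
  assume eq: "real n * phi = of_int c"
  then have "real n * sqrt 5 = 2 * of_int c - real n" unfolding phi_def by (simp add: field_simps)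
  then have "(real n * sqrt 5)^2 = (2 * of_int c - real n)^2" by simp
  then have "5 * (real n)^2 = (of_int (2*c - int n))^2" by (simp add: power_mult_distrib)
  then have "of_int (5 * (int n)^2) = (of_int ((2*c - int n)^2) :: real)" by simp
  then have "5 * (int n)^2 = (2*c - int n)^2" using of_int_eq_iff by blast
  moreover
  define y where "y = nat \<bar>2*c - int n\<bar>"
  have "int y = \<bar>2*c - int n\<bar>" unfolding y_def by simp
  then have "int (y^2) = \<bar>2*c - int n\<bar>^2" by (metis of_nat_power)
  then have "int (y^2) = (2*c - int n)^2" by simp
  ultimately have "int ((nat \<bar>2*c - int n\<bar>)^2) = int (5 * n^2)" unfolding y_def by simp
  then have "(nat \<bar>2*c - int n\<bar>)^2 = 5 * n^2" using of_nat_eq_iff by blast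
  then have "n = 0" by (rule no5)
  then show False using assms by simp
qed

definition th :: "nat \<Rightarrow> real" where "th n = real n * phi - of_int (a n)"

lemma th_bounds: assumes "n \<ge> 1" shows "0 < th n" "th n < 1"
proof -
  have "of_int (a n) \<le> real n * phi" "real n * phi < of_int (a n) + 1"
    unfolding a_def by linarith+
  moreover have "real n * phi \<noteq> of_int (a n)" using irr assms by blast
  ultimately show "0 < th n" "th n < 1" unfolding th_def by linarith+
qed

lemma a_eq: "of_int (a n) = real n * phi - th n" unfolding th_def by simp

lemma a_ge: "a n \<ge> int n"
proof -
  have "real n * 1 \<le> real n * phi" using phi_gt1 by (intro mult_left_mono) auto
  then show ?thesis unfolding a_def by (simp add: le_floor_iff)
qed

lemma floor_eqI': "of_int z \<le> x \<Longrightarrow> x < of_int z + 1 \<Longrightarrow> \<lfloor>x\<rfloor> = z" by (simp add: floor_eq_iff)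

lemma a_suc: assumes "n \<ge> 1" shows "a (n+1) = a n + 1 \<or> a (n+1) = a n + 2"
proof -
  have "real (n+1) * phi = of_int (a n) + (th n + phi)" using a_eq[of n] by (simp add: algebra_simps)
  moreover have "1 < th n + phi" "th n + phi < 3" using th_bounds[OF assms] phi_gt1 phi_lt2 by linarith+
  ultimately show ?thesis unfolding a_def by linarith
qed

lemma a_a: assumes "m \<ge> 1" shows "a (nat (a m)) = a m + int m - 1"
proof -
  have am: "a m \<ge> 1" using a_ge[of m] assms by linarith
  have "real (nat (a m)) * phi = of_int (a m) * phi" using am by simp
  also have "\<dots> = (real m * phi - th m) * phi" using a_eq[of m] by simp
  also have "\<dots> = real m * (phi * phi) - th m * phi" by (simp add: algebra_simps)
  also have "\<dots> = of_int (a m + int m - 1) + (1 - th m * (phi - 1))"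
    using a_eq[of m] phi_sq by (simp add: algebra_simps)
  finally have e: "real (nat (a m)) * phi = of_int (a m + int m - 1) + (1 - th m * (phi - 1))" .
  have "th m * (phi - 1) < 1 * 1" using th_bounds[OF assms] phi_gt1 phi_lt2
    by (intro mult_strict_mono) auto
  moreover have "th m * (phi - 1) > 0" using th_bounds[OF assms] phi_gt1 by simp
  ultimately show ?thesis unfolding a_def[of "nat (a m)"] e by (intro floor_eqI') linarith+
qed

lemma a_a_suc: assumes "m \<ge> 1" shows "a (nat (a m) + 1) = a (nat (a m)) + 2"
proof -
  have am: "a m \<ge> 1" using a_ge[of m] assms by linarith
  have "real (nat (a m) + 1) * phi = of_int (a m) * phi + phi" using am by (simp add: algebra_simps)
  also have "\<dots> = (real m * phi - th m) * phi + phi" using a_eq[of m] by simp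
  also have "\<dots> = real m * (phi * phi) - th m * phi + phi" by (simp add: algebra_simps)
  also have "\<dots> = of_int (a m + int m + 1) + (phi - 1) * (1 - th m)"
    using a_eq[of m] phi_sq by (simp add: algebra_simps)
  finally have e: "real (nat (a m) + 1) * phi = of_int (a m + int m + 1) + (phi - 1) * (1 - th m)" .
  have "(phi - 1) * (1 - th m) < 1 * 1" using th_bounds[OF assms] phi_gt1 phi_lt2
    by (intro mult_strict_mono) auto
  moreover have "(phi - 1) * (1 - th m) > 0" using th_bounds[OF assms] phi_gt1 by simp
  ultimately have "a (nat (a m) + 1) = a m + int m + 1" unfolding a_def[of "nat (a m) + 1"] e by (intro floor_eqI') linarith+
  then show ?thesis using a_a[OF assms] by simp
qed

lemma a_suc2: assumes "n \<ge> 1" "a (n+1) = a n + 2"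
  shows "\<exists>m\<ge>1. n = nat (a m)"
proof -
  have "real (n+1) * phi = of_int (a n) + (th n + phi)" using a_eq[of n] by (simp add: algebra_simps)
  then have ge: "th n + phi \<ge> 2" using assms(2) unfolding a_def by linarith
  have ne: "th n + phi \<noteq> 2"
  proof
    assume "th n + phi = 2"
    then have "real (n+1) * phi = of_int (a n + 2)" using a_eq[of n] by (simp add: algebra_simps)
    moreover have "real (n+1) * phi \<noteq> of_int (a n + 2)" by (rule irr) simp
    ultimately show False by blast
  qed
  define m where "m = nat (a n - int n + 1)"
  have mge: "m \<ge> 1" using a_ge[of n] unfolding m_def by linarith
  have mi: "int m = a n - int n + 1" using a_ge[of n] unfolding m_def by linarith
  have "real m * phi = (real n * phi - th n - real n + 1) * phi"
    using a_eq[of n] mi by (metis of_int_of_nat_eq of_int_add of_int_diff of_int_1)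
  also have "\<dots> = real n * (phi * phi) - th n * phi - real n * phi + phi" by (simp add: algebra_simps)
  also have "\<dots> = real n + phi * (1 - th n)" using phi_sq by (simp add: algebra_simps)
  finally have e: "real m * phi = real n + phi * (1 - th n)" .
  have "th n > 2 - phi" using ge ne by linarith
  then have "phi * (1 - th n) < phi * (phi - 1)" using phi_gt1 by simp
  also have "\<dots> = 1" using phi_sq by (simp add: algebra_simps)
  finally have "phi * (1 - th n) < 1" .
  moreover have "phi * (1 - th n) \<ge> 0" using th_bounds[OF assms(1)] phi_gt1 by simp
  ultimately have "a m = int n" unfolding a_def[of m] e by (intro floor_eqI') linarith+
  then show ?thesis using mge by (intro exI[of _ m]) simp
qed

lemma fibr2: "int (fib (i+2)) = int (fib (i+1)) + int (fib i)" using fib_plus_2[of i] by simp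
lemma fibr3: "int (fib (i+3)) = int (fib (i+2)) + int (fib (i+1))" proof -
  have "fib (i+1+2) = fib (i+1+1) + fib (i+1)" by (rule fib_plus_2)
  moreover have "i+1+2 = i+3" "i+1+1 = i+2" by simp_all
  ultimately show ?thesis by (metis of_nat_add)
qed
lemma fibpos: "int (fib (i+1)) \<ge> 1" using fib_neq_0_nat[of "i+1"] by simp

lemma f_j: "f i j n = f i 0 n - j" unfolding f_def by simp

lemma a1: "a 1 = 1" unfolding a_def using phi_gt1 phi_lt2 by (simp add: floor_eq_iff)

lemma g1: "f i 0 1 = int (fib (i+2))" unfolding f_def using a1 fibr2[of i] by simp

lemma g_step: "f i 0 (n+1) - f i 0 n = int (fib (i+1)) * (a (n+1) - a n) + int (fib i)"
  unfolding f_def by (simp add: algebra_simps)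

lemma g_step_ge: assumes "n \<ge> 1" shows "f i 0 (n+1) - f i 0 n \<ge> int (fib (i+2))"
proof -
  have "a (n+1) - a n \<ge> 1" using a_suc[OF assms] by auto
  then have "int (fib (i+1)) * (a (n+1) - a n) \<ge> int (fib (i+1)) * 1"
    by (intro mult_left_mono) auto
  then show ?thesis using g_step[of i n] fibr2[of i] by simp
qed

lemma g_step_cases: assumes "n \<ge> 1"
  shows "f i 0 (n+1) - f i 0 n = int (fib (i+2)) \<or> (f i 0 (n+1) - f i 0 n = int (fib (i+3)) \<and> a (n+1) = a n + 2)"
proof -
  have f3: "int (fib (i+3)) = 2*int (fib (i+1)) + int (fib i)" using fibr2[of i] fibr3[of i] by linarith
  show ?thesis using a_suc[OF assms]
  proof
    assume "a (n+1) = a n + 1" then show ?thesis using g_step[of i n] fibr2[of i] by simp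
  next
    assume "a (n+1) = a n + 2" then show ?thesis using g_step[of i n] f3 by simp
  qed
qed

lemma g_mono: assumes "n \<ge> 1" "n < n'" shows "f i 0 n' - f i 0 n \<ge> int (fib (i+2))"
  using assms(2)
proof (induction n' rule: less_induct)
  case (less n')
  then obtain p where p: "n' = p + 1" "n \<le> p" by (metis Suc_eq_plus1 less_Suc_eq_0_disj less_imp_Suc_add add_Suc_right add.commute le_add1 not_less0)
  have st: "f i 0 (p+1) - f i 0 p \<ge> int (fib (i+2))" using g_step_ge[of p i] p assms(1) by simp
  show ?case
  proof (cases "n = p")
    case True then show ?thesis using st p by simp
  next
    case False
    then have "f i 0 p - f i 0 n \<ge> int (fib (i+2))" using less.IH[of p] p by simp
    moreover have "int (fib (i+2)) \<ge> 0" by simp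
    ultimately show ?thesis using st p by simp
  qed
qed

lemma g_shift: assumes "m \<ge> 1" shows "f (i+1) 0 m = f i 0 (nat (a m)) + int (fib (i+1))"
proof -
  have am: "a m \<ge> 1" using a_ge[of m] assms by linarith
  have "f i 0 (nat (a m)) = int (fib (i+1)) * (a m + int m - 1) + int (fib i) * a m"
    unfolding f_def using a_a[OF assms] am by simp
  then show ?thesis unfolding f_def using fibr2[of i] by (simp add: algebra_simps)
qed

lemma g_stepA: assumes "m \<ge> 1" shows "f i 0 (nat (a m) + 1) - f i 0 (nat (a m)) = int (fib (i+3))"
  using g_step[of i "nat (a m)"] a_a_suc[OF assms] fibr2[of i] fibr3[of i] by simp

definition Iset :: "nat \<Rightarrow> (nat \<times> int) set" where
  "Iset s = {(i, j). i \<in> {s, s+1} \<and> - int (fib (i + 1)) \<ge> j \<and> j \<ge> 1 - int (fib (s+3))}"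

lemma same1: assumes "n \<ge> 1" "n' \<ge> 1" "(s,j) \<in> Iset s" "(s,j') \<in> Iset s" "f s j n = f s j' n'"
  shows "n = n' \<and> j = j'"
proof -
  have b: "- int (fib (s+1)) \<ge> j" "j \<ge> 1 - int (fib (s+3))" "- int (fib (s+1)) \<ge> j'" "j' \<ge> 1 - int (fib (s+3))"
    using assms(3,4) unfolding Iset_def by auto
  have e: "f s 0 n - j = f s 0 n' - j'" using assms(5) f_j by metis
  have "\<not> n < n'"
  proof
    assume "n < n'" then have "f s 0 n' - f s 0 n \<ge> int (fib (s+2))" using g_mono assms(1) by blast
    then show False using e b fibr3[of s] by linarith
  qed
  moreover have "\<not> n' < n"
  proof
    assume "n' < n" then have "f s 0 n - f s 0 n' \<ge> int (fib (s+2))" using g_mono assms(2) by blast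
    then show False using e b fibr3[of s] by linarith
  qed
  ultimately show ?thesis using e by simp
qed

lemma same2: assumes "n \<ge> 1" "n' \<ge> 1" "(s+1,j) \<in> Iset s" "(s+1,j') \<in> Iset s" "f (s+1) j n = f (s+1) j' n'"
  shows "n = n' \<and> j = j'"
proof -
  have b: "- int (fib (s+2)) \<ge> j" "j \<ge> 1 - int (fib (s+3))" "- int (fib (s+2)) \<ge> j'" "j' \<ge> 1 - int (fib (s+3))"
    using assms(3,4) unfolding Iset_def by (auto simp: add.assoc)
  have e: "f (s+1) 0 n - j = f (s+1) 0 n' - j'" using assms(5) f_j by metis
  have "\<not> n < n'"
  proof
    assume "n < n'" then have "f (s+1) 0 n' - f (s+1) 0 n \<ge> int (fib (s+1+2))" using g_mono assms(1) by blast
    then show False using e b fibr3[of s] fibpos[of s] by (simp add: add.assoc)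
  qed
  moreover have "\<not> n' < n"
  proof
    assume "n' < n" then have "f (s+1) 0 n - f (s+1) 0 n' \<ge> int (fib (s+1+2))" using g_mono assms(2) by blast
    then show False using e b fibr3[of s] fibpos[of s] by (simp add: add.assoc)
  qed
  ultimately show ?thesis using e by simp
qed

lemma cross: assumes "n \<ge> 1" "m \<ge> 1" "(s,j) \<in> Iset s" "(s+1,j') \<in> Iset s" "f s j n = f (s+1) j' m"
  shows False
proof -
  have b: "- int (fib (s+1)) \<ge> j" "j \<ge> 1 - int (fib (s+3))" "- int (fib (s+2)) \<ge> j'" "j' \<ge> 1 - int (fib (s+3))"
    using assms(3,4) unfolding Iset_def by (auto simp: add.assoc)
  have am: "nat (a m) \<ge> 1" using a_ge[of m] assms(2) by linarith
  have e: "f s 0 n - j = f s 0 (nat (a m)) + int (fib (s+1)) - j'" using assms(5) f_j g_shift[OF assms(2)] by metis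
  have "\<not> n \<le> nat (a m)"
  proof
    assume "n \<le> nat (a m)"
    then have "f s 0 n \<le> f s 0 (nat (a m))" using g_mono[OF assms(1), of "nat (a m)" s] by (cases "n = nat (a m)") force+
    then show False using e b fibr3[of s] fibr2[of s] by linarith
  qed
  then have "nat (a m) + 1 \<le> n" by simp
  then have "f s 0 n \<ge> f s 0 (nat (a m) + 1)" using g_mono[of "nat (a m) + 1" n s] by (cases "n = nat (a m) + 1") force+
  then have "f s 0 n - f s 0 (nat (a m)) \<ge> int (fib (s+3))" using g_stepA[OF assms(2), of s] by linarith
  then show False using e b fibr3[of s] fibr2[of s] by linarith
qed

lemma cover_step: assumes "n \<ge> 1" "f s 0 n + int (fib (s+1)) \<le> x" "x < f s 0 (n+1) + int (fib (s+1))"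
  shows "\<exists>i j m. (i,j) \<in> Iset s \<and> m \<ge> 1 \<and> x = f i j m"
proof (cases "x < f s 0 n + int (fib (s+3))")
  case True
  define j where "j = f s 0 n - x"
  have "(s,j) \<in> Iset s" unfolding Iset_def j_def using True assms(2) fibr3[of s] fibpos[of s] by auto
  moreover have "x = f s j n" unfolding j_def using f_j[of s j n] j_def by simp
  ultimately show ?thesis using assms(1) by blast
next
  case False
  then have "f s 0 (n+1) - f s 0 n \<noteq> int (fib (s+2))" using assms(3) fibr3[of s] by linarith
  then have "a (n+1) = a n + 2" using g_step_cases[OF assms(1), of s] by blast
  then obtain m where m: "m \<ge> 1" "n = nat (a m)" using a_suc2[OF assms(1)] by blast
  have st: "f s 0 (n+1) - f s 0 n = int (fib (s+3))" using g_stepA[OF m(1), of s] m(2) by simp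
  define j where "j = f (s+1) 0 m - x"
  have jj: "j = f s 0 n + int (fib (s+1)) - x" unfolding j_def using g_shift[OF m(1), of s] m(2) by simp
  have "(s+1,j) \<in> Iset s" unfolding Iset_def using jj False assms(3) st fibr3[of s] by (auto simp: add.assoc)
  moreover have "x = f (s+1) j m" unfolding j_def using f_j[of "s+1" j m] j_def by simp
  ultimately show ?thesis using m(1) by blast
qed

lemma cover: assumes "x \<ge> int (fib (s+3))" shows "\<exists>i j m. (i,j) \<in> Iset s \<and> m \<ge> 1 \<and> x = f i j m"
proof -
  have P: "\<forall>x. int (fib (s+3)) \<le> x \<and> x < f s 0 (N+1) + int (fib (s+1)) \<longrightarrow> (\<exists>i j m. (i,j) \<in> Iset s \<and> m \<ge> 1 \<and> x = f i j m)" for N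
  proof (induction N)
    case 0
    have "f s 0 (0+1) + int (fib (s+1)) = int (fib (s+3))" using g1[of s] fibr3[of s] by simp
    then show ?case by auto
  next
    case (Suc N)
    show ?case
    proof (intro allI impI)
      fix x assume h: "int (fib (s+3)) \<le> x \<and> x < f s 0 (Suc N + 1) + int (fib (s+1))"
      show "\<exists>i j m. (i,j) \<in> Iset s \<and> m \<ge> 1 \<and> x = f i j m"
      proof (cases "x < f s 0 (N+1) + int (fib (s+1))")
        case True then show ?thesis using Suc.IH h by blast
      next
        case False then show ?thesis using cover_step[of "N+1" s x] h by simp
      qed
    qed
  qed
  have "f s 0 (nat x + 1) \<ge> int (nat x + 1)"
  proof -
    have "a (nat x + 1) \<ge> int (nat x + 1)" by (rule a_ge)
    moreover have "int (fib (s+1)) * a (nat x + 1) \<ge> 1 * a (nat x + 1)"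
    proof (rule mult_right_mono)
      show "1 \<le> int (fib (s+1))" by (rule fibpos)
      show "0 \<le> a (nat x + 1)" using a_ge[of "nat x + 1"] by linarith
    qed
    moreover have "int (fib s) * int (nat x + 1) \<ge> 0" by simp
    ultimately show ?thesis unfolding f_def by linarith
  qed
  then have "x < f s 0 (nat x + 1) + int (fib (s+1))" using fibpos[of s] by linarith
  then show ?thesis using P[of "nat x"] assms by blast
qed

lemma lower: assumes "(i,j) \<in> Iset s" "m \<ge> 1" shows "f i j m \<ge> int (fib (s+3))"
proof -
  have "f i 0 m \<ge> f i 0 1" using g_mono[of 1 m i] assms(2) by (cases "m = 1") force+
  then have ge: "f i 0 m \<ge> int (fib (i+2))" using g1 by simp
  have "i = s \<or> i = s+1" using assms(1) unfolding Iset_def by auto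
  then show ?thesis
  proof
    assume "i = s" then show ?thesis using ge assms(1) f_j[of i j m] fibr3[of s] unfolding Iset_def by auto
  next
    assume "i = s+1" then show ?thesis using ge assms(1) f_j[of i j m] fibr3[of s] fibr3[of "s+1"]
      unfolding Iset_def by (auto simp: add.assoc)
  qed
qed

lemma inj: assumes "(i,j) \<in> Iset s" "(i',j') \<in> Iset s" "n \<ge> 1" "n' \<ge> 1" "f i j n = f i' j' n'"
  shows "i = i' \<and> j = j'"
proof -
  have "i = s \<or> i = s+1" "i' = s \<or> i' = s+1" using assms(1,2) unfolding Iset_def by auto
  then show ?thesis using same1[of n n' s j j'] same2[of n n' s j j'] cross[of n n' s j j'] cross[of n' n s j' j] assms
    by auto
qed

lemma Iset_eq: "Iset s = ({s} \<times> {1 - int (fib (s+3)) .. - int (fib (s+1))}) \<union> ({s+1} \<times> {1 - int (fib (s+3)) .. - int (fib (s+2))})"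
  unfolding Iset_def by (auto simp: add.assoc)

lemma card_Iset: "card (Iset s) = fib (s+3)"
proof -
  have "card (Iset s) = card ({s} \<times> {1 - int (fib (s+3)) .. - int (fib (s+1))}) + card ({s+1} \<times> {1 - int (fib (s+3)) .. - int (fib (s+2))})"
    unfolding Iset_eq by (rule card_Un_disjoint) auto
  also have "\<dots> = nat (int (fib (s+3)) - int (fib (s+1))) + nat (int (fib (s+3)) - int (fib (s+2)))"
    by simp
  also have "\<dots> = fib (s+3)" using fibr3[of s] fibr2[of s] by simp
  finally show ?thesis .
qed

theorem corollary3p9:
  fixes k :: nat
  assumes "k \<ge> 3"
  defines "I \<equiv> {(i :: nat, j :: int). i \<in> {k - 3, k - 2} \<and>
                   - int (fib (i + 1)) \<ge> j \<and> j \<ge> 1 - int (fib k)}"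
  shows "card I = fib k
    \<and> card ((\<lambda>(i, j). R i j) ` I) = fib k
    \<and> (\<forall>p\<in>I. \<forall>q\<in>I. p \<noteq> q \<longrightarrow> R (fst p) (snd p) \<inter> R (fst q) (snd q) = {})
    \<and> (\<Union>p\<in>I. R (fst p) (snd p)) = {n :: int. n \<ge> int (fib k)}"
proof -
  obtain s where ks: "k = s + 3" using assms(1) by (metis add.commute le_Suc_ex)
  have II: "I = Iset s" unfolding I_def Iset_def ks by (simp add: numeral_eq_Suc)
  have disj: "R (fst p) (snd p) \<inter> R (fst q) (snd q) = {}" if "p \<in> I" "q \<in> I" "p \<noteq> q" for p q
  proof (rule ccontr)
    assume "R (fst p) (snd p) \<inter> R (fst q) (snd q) \<noteq> {}"
    then obtain n n' where "n \<ge> 1" "n' \<ge> 1" "f (fst p) (snd p) n = f (fst q) (snd q) n'"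
      unfolding R_def by blast
    then have "fst p = fst q \<and> snd p = snd q" using inj[of "fst p" "snd p" s "fst q" "snd q" n n'] that II by auto
    then show False using that by (simp add: prod_eq_iff)
  qed
  have ne: "R (fst p) (snd p) \<noteq> {}" for p unfolding R_def by auto
  have injR: "inj_on (\<lambda>(i, j). R i j) I"
  proof (rule inj_onI)
    fix p q assume "p \<in> I" "q \<in> I" "(\<lambda>(i, j). R i j) p = (\<lambda>(i, j). R i j) q"
    then show "p = q" using disj[of p q] ne[of p] by (cases p, cases q) auto
  qed
  have un: "(\<Union>p\<in>I. R (fst p) (snd p)) = {n :: int. n \<ge> int (fib k)}"
  proof
    show "(\<Union>p\<in>I. R (fst p) (snd p)) \<subseteq> {n :: int. n \<ge> int (fib k)}"
      unfolding R_def II ks using lower by force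
    show "{n :: int. n \<ge> int (fib k)} \<subseteq> (\<Union>p\<in>I. R (fst p) (snd p))"
    proof
      fix x assume "x \<in> {n :: int. n \<ge> int (fib k)}"
      then obtain i j m where "(i,j) \<in> Iset s" "m \<ge> 1" "x = f i j m" using cover[of s x] ks by auto
      then show "x \<in> (\<Union>p\<in>I. R (fst p) (snd p))" unfolding II R_def by force
    qed
  qed
  have cI: "card I = fib k" using card_Iset II ks by simp
  show ?thesis using cI card_image[OF injR] disj un by simp
qed
end
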